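(* For every integer $n\geq 2$, the operator $W_n^{*}$ on $H^2$ is densely Li-Yorke chaotic.
   Context: $H^2$ denotes the Hardy space of analytic functions $f(z)=\sum_{k\ge0}\hat f(k)z^k$ on the open unit disk with $\sum_{k}|\hat f(k)|^2<\infty$. For $n\in\mathbb{N}$, $W_n$ is the bounded operator on $H^2$ given by $W_nf(z)=(1+z+\cdots+z^{n-1})f(z^n)$, and $W_n^{*}$ is its adjoint. An operator $T$ on a Banach space $Y$ is densely Li-Yorke chaotic if there is an uncountable dense set $S\subseteq Y$ such that for all distinct $x,y\in S$, $\liminf_{k\to\infty}\|T^kx-T^ky\|=0$ and $\limsup_{k\to\infty}\|T^kx-T^ky\|=\infty$. *)

theory Defs
  imports "HOL-Analysis.Analysis"
begin

text \<open>The Hardy space H^2, represented via the Taylor coefficient sequence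
  f = (fhat k)_k of f(z) = sum_k fhat k z^k; it consists of the square-summable sequences.\<close>

definition H2 :: "(nat \<Rightarrow> complex) set" where
  "H2 = {a. summable (\<lambda>k. (cmod (a k))\<^sup>2)}"

definition h2norm :: "(nat \<Rightarrow> complex) \<Rightarrow> real" where
  "h2norm a = sqrt (\<Sum>k. (cmod (a k))\<^sup>2)"

definition h2inner :: "(nat \<Rightarrow> complex) \<Rightarrow> (nat \<Rightarrow> complex) \<Rightarrow> complex" where
  "h2inner a b = (\<Sum>k. a k * cnj (b k))"

text \<open>W_n f(z) = (1 + z + ... + z^(n-1)) f(z^n): the coefficient of z^(n j + r), r < n,
  equals fhat j, i.e. the k-th coefficient is fhat (k div n).\<close>

definition W :: "nat \<Rightarrow> (nat \<Rightarrow> complex) \<Rightarrow> (nat \<Rightarrow> complex)" where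
  "W n a = (\<lambda>k. a (k div n))"

definition Wadj :: "nat \<Rightarrow> (nat \<Rightarrow> complex) \<Rightarrow> (nat \<Rightarrow> complex)" where
  "Wadj n g = (THE h. h \<in> H2 \<and> (\<forall>f\<in>H2. h2inner (W n f) g = h2inner f h))"

definition densely_Li_Yorke_chaotic ::
  "('a::minus) set \<Rightarrow> ('a \<Rightarrow> real) \<Rightarrow> ('a \<Rightarrow> 'a) \<Rightarrow> bool" where
  "densely_Li_Yorke_chaotic Y nrm T \<longleftrightarrow>
     (\<exists>S\<subseteq>Y. uncountable S
        \<and> (\<forall>y\<in>Y. \<forall>e>0. \<exists>s\<in>S. nrm (y - s) < e)
        \<and> (\<forall>x\<in>S. \<forall>y\<in>S. x \<noteq> y \<longrightarrow>
              liminf (\<lambda>k. ereal (nrm ((T ^^ k) x - (T ^^ k) y))) = 0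
            \<and> limsup (\<lambda>k. ereal (nrm ((T ^^ k) x - (T ^^ k) y))) = \<infinity>))"

end

theory Submission
  imports Defs
begin


lemma H2_summable: "a \<in> H2 \<Longrightarrow> summable (\<lambda>k. (cmod (a k))\<^sup>2)"
  by (simp add: H2_def)

lemma h2norm_sq: "a \<in> H2 \<Longrightarrow> (h2norm a)\<^sup>2 = (\<Sum>k. (cmod (a k))\<^sup>2)"
  unfolding h2norm_def by (simp add: suminf_nonneg H2_summable)

lemma h2norm_nonneg: "a \<in> H2 \<Longrightarrow> h2norm a \<ge> 0"
  unfolding h2norm_def by (simp add: suminf_nonneg H2_summable)

lemma partial_le_h2: assumes "finite F" "a \<in> H2" shows "(\<Sum>k\<in>F. (cmod (a k))\<^sup>2) \<le> (h2norm a)\<^sup>2"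
proof -
  have "(\<Sum>k\<in>F. (cmod (a k))\<^sup>2) \<le> (\<Sum>k. (cmod (a k))\<^sup>2)"
    by (rule sum_le_suminf[OF H2_summable[OF assms(2)] assms(1)]) simp
  thus ?thesis by (simp add: h2norm_sq assms(2))
qed

lemma coord_le_h2: assumes "a \<in> H2" shows "cmod (a i) \<le> h2norm a"
proof -
  have "(cmod (a i))\<^sup>2 \<le> (h2norm a)\<^sup>2" using partial_le_h2[OF _ assms, of "{i}"] by simp
  thus ?thesis by (rule power2_le_imp_le) (simp add: h2norm_nonneg assms)
qed

lemma H2_fatou:
  fixes g :: "nat \<Rightarrow> nat \<Rightarrow> complex" and Nz :: nat and Ni :: "nat \<Rightarrow> nat"
  assumes "\<And>N. N \<ge> Nz \<Longrightarrow> g N \<in> H2" "\<And>N. N \<ge> Nz \<Longrightarrow> h2norm (g N) \<le> C"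
    and "\<And>i N. N \<ge> Ni i \<Longrightarrow> g N i = a i"
  shows "a \<in> H2 \<and> h2norm a \<le> C"
proof -
  have C0: "C \<ge> 0"
  proof -
    have "g Nz \<in> H2" using assms(1) by simp
    hence "0 \<le> h2norm (g Nz)" by (rule h2norm_nonneg)
    also have "\<dots> \<le> C" using assms(2) by simp
    finally show ?thesis .
  qed
  have part: "(\<Sum>k<K. (cmod (a k))\<^sup>2) \<le> C\<^sup>2" for K
  proof -
    define N where "N = max Nz (Max (insert 0 (Ni ` {..<K})))"
    have Ni: "N \<ge> Ni k" if "k < K" for k
      unfolding N_def using that by (simp add: le_max_iff_disj)
    have "(\<Sum>k<K. (cmod (a k))\<^sup>2) = (\<Sum>k<K. (cmod (g N k))\<^sup>2)"
      by (rule sum.cong) (auto simp: assms(3)[OF Ni])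
    also have "\<dots> \<le> (h2norm (g N))\<^sup>2" by (rule partial_le_h2) (auto simp: N_def assms(1))
    also have "\<dots> \<le> C\<^sup>2" using assms(2)[of N] h2norm_nonneg[of "g N"] assms(1)[of N] by (simp add: N_def power_mono)
    finally show ?thesis .
  qed
  have s: "summable (\<lambda>k. (cmod (a k))\<^sup>2)"
    by (rule bounded_imp_summable[of _ "C\<^sup>2"]) (simp, metis part lessThan_Suc_atMost)
  have "(\<Sum>k. (cmod (a k))\<^sup>2) \<le> C\<^sup>2" by (rule suminf_le_const[OF s part])
  hence "h2norm a \<le> sqrt (C\<^sup>2)" unfolding h2norm_def by (rule real_sqrt_le_mono)
  with C0 s show ?thesis by (simp add: H2_def)
qed

lemma H2_finite: assumes "\<And>i. i \<ge> N \<Longrightarrow> a i = 0"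
  shows "a \<in> H2" "h2norm a = sqrt (\<Sum>i<N. (cmod (a i))\<^sup>2)"
proof -
  have e: "(\<lambda>k. (cmod (a k))\<^sup>2) sums (\<Sum>i<N. (cmod (a i))\<^sup>2)"
    by (rule sums_finite) (auto simp: assms)
  show "a \<in> H2" using e by (auto simp: H2_def sums_summable)
  show "h2norm a = sqrt (\<Sum>i<N. (cmod (a i))\<^sup>2)" using e by (simp add: h2norm_def sums_iff)
qed

lemma h2_triangle:
  assumes a: "a \<in> H2" and b: "b \<in> H2"
  shows "(\<lambda>k. a k + b k) \<in> H2 \<and> h2norm (\<lambda>k. a k + b k) \<le> h2norm a + h2norm b"
proof (rule H2_fatou[where g = "\<lambda>N k. if k < N then a k + b k else 0" and Nz = 0 and Ni = Suc])
  fix N :: nat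
  let ?g = "\<lambda>k. if k < N then a k + b k else 0"
  show "?g \<in> H2" by (rule H2_finite(1)[of N]) auto
  have "h2norm ?g = sqrt (\<Sum>i<N. (cmod (?g i))\<^sup>2)" by (rule H2_finite(2)[of N]) auto
  also have "\<dots> = L2_set (\<lambda>i. cmod (a i + b i)) {..<N}" by (simp add: L2_set_def)
  also have "\<dots> \<le> L2_set (\<lambda>i. cmod (a i) + cmod (b i)) {..<N}"
    by (rule L2_set_mono) (auto simp: norm_triangle_ineq)
  also have "\<dots> \<le> L2_set (\<lambda>i. cmod (a i)) {..<N} + L2_set (\<lambda>i. cmod (b i)) {..<N}"
    by (rule L2_set_triangle_ineq)
  also have "\<dots> \<le> h2norm a + h2norm b"
  proof (rule add_mono)
    have "L2_set (\<lambda>i. cmod (a i)) {..<N} \<le> sqrt ((h2norm a)\<^sup>2)"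
      unfolding L2_set_def by (rule real_sqrt_le_mono) (use partial_le_h2[OF _ a, of "{..<N}"] in simp)
    thus "L2_set (\<lambda>i. cmod (a i)) {..<N} \<le> h2norm a" using h2norm_nonneg[OF a] by simp
    have "L2_set (\<lambda>i. cmod (b i)) {..<N} \<le> sqrt ((h2norm b)\<^sup>2)"
      unfolding L2_set_def by (rule real_sqrt_le_mono) (use partial_le_h2[OF _ b, of "{..<N}"] in simp)
    thus "L2_set (\<lambda>i. cmod (b i)) {..<N} \<le> h2norm b" using h2norm_nonneg[OF b] by simp
  qed
  finally show "h2norm ?g \<le> h2norm a + h2norm b" .
qed auto



lemma h2_scale: assumes "a \<in> H2"
  shows "(\<lambda>k. c * a k) \<in> H2" "h2norm (\<lambda>k. c * a k) = cmod c * h2norm a"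
proof -
  have e: "(\<lambda>k. (cmod (c * a k))\<^sup>2) = (\<lambda>k. (cmod c)\<^sup>2 * (cmod (a k))\<^sup>2)"
    by (simp add: norm_mult power_mult_distrib)
  have s: "summable (\<lambda>k. (cmod c)\<^sup>2 * (cmod (a k))\<^sup>2)"
    by (rule summable_mult[OF H2_summable[OF assms]])
  show "(\<lambda>k. c * a k) \<in> H2" unfolding H2_def using e s by simp
  have "h2norm (\<lambda>k. c * a k) = sqrt ((cmod c)\<^sup>2 * (\<Sum>k. (cmod (a k))\<^sup>2))"
    unfolding h2norm_def e by (subst suminf_mult[OF H2_summable[OF assms]]) simp
  also have "\<dots> = cmod c * h2norm a" by (simp add: h2norm_def real_sqrt_mult)
  finally show "h2norm (\<lambda>k. c * a k) = cmod c * h2norm a" .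
qed

lemma h2_add: assumes "a \<in> H2" "b \<in> H2"
  shows "(\<lambda>k. a k + b k) \<in> H2" "h2norm (\<lambda>k. a k + b k) \<le> h2norm a + h2norm b"
  using h2_triangle[OF assms] by auto

lemma h2_diff: assumes "a \<in> H2" "b \<in> H2"
  shows "(\<lambda>k. a k - b k) \<in> H2" "h2norm (\<lambda>k. a k - b k) \<le> h2norm a + h2norm b"
proof -
  have m: "(\<lambda>k. (-1) * b k) \<in> H2" "h2norm (\<lambda>k. (-1) * b k) = h2norm b"
    using h2_scale[OF assms(2), of "-1"] by auto
  have "(\<lambda>k. a k - b k) = (\<lambda>k. a k + (-1) * b k)" by simp
  thus "(\<lambda>k. a k - b k) \<in> H2" "h2norm (\<lambda>k. a k - b k) \<le> h2norm a + h2norm b"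
    using h2_add[OF assms(1) m(1)] m(2) by auto
qed

lemma h2_zero: "(\<lambda>k. 0) \<in> H2" "h2norm (\<lambda>k. 0) = 0"
  using H2_finite[of 0 "\<lambda>k. 0"] by auto

definition Aop :: "nat \<Rightarrow> (nat \<Rightarrow> complex) \<Rightarrow> (nat \<Rightarrow> complex)" where
  "Aop n g = (\<lambda>j. \<Sum>r<n. g (n * j + r))"

lemma group_eq: fixes n j :: nat shows "(\<Sum>r<n. f (n * j + r)) = sum f {j*n..<j*n+n}"
proof -
  have "sum f {j*n..<j*n+n} = sum f {0 + j*n..<n + j*n}" by (simp add: add.commute)
  also have "\<dots> = (\<Sum>i = 0..<n. f (i + j*n))" by (rule sum.shift_bounds_nat_ivl)
  also have "\<dots> = (\<Sum>r<n. f (n * j + r))" by (simp add: atLeast0LessThan add.commute mult.commute)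
  finally show ?thesis by simp
qed

lemma div_in_block: assumes "0 < (n::nat)" shows "k \<in> {j*n..<j*n+n} \<longleftrightarrow> k div n = j"
proof -
  have "k div n = j \<longleftrightarrow> j \<le> k div n \<and> k div n < Suc j" by auto
  also have "\<dots> \<longleftrightarrow> j * n \<le> k \<and> k < Suc j * n"
    using assms by (simp add: less_eq_div_iff_mult_less_eq div_less_iff_less_mult del: mult_Suc)
  finally show ?thesis by (simp add: add.commute)
qed



lemma Aop_H2: assumes n: "0 < n" and g: "g \<in> H2"
  shows "Aop n g \<in> H2" "h2norm (Aop n g) \<le> sqrt n * h2norm g"
proof -
  define G where "G = (\<lambda>j. sum (\<lambda>k. (cmod (g k))\<^sup>2) {j*n..<j*n+n})"
  have Gs: "G sums (\<Sum>k. (cmod (g k))\<^sup>2)"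
    unfolding G_def by (rule sums_group[OF summable_sums[OF H2_summable[OF g]] n])
  have bound: "(cmod (Aop n g j))\<^sup>2 \<le> n * G j" for j
  proof -
    have "cmod (Aop n g j) \<le> (\<Sum>r<n. cmod (g (n*j + r)))"
      unfolding Aop_def by (rule norm_sum)
    hence "(cmod (Aop n g j))\<^sup>2 \<le> (\<Sum>r<n. 1 * cmod (g (n*j + r)))\<^sup>2"
      by (simp add: power_mono)
    also have "\<dots> \<le> (\<Sum>r<n. 1\<^sup>2) * (\<Sum>r<n. (cmod (g (n*j + r)))\<^sup>2)"
      by (rule Cauchy_Schwarz_ineq_sum)
    also have "\<dots> = n * G j" unfolding G_def using group_eq[where n=n and j=j and f="\<lambda>k. (cmod (g k))\<^sup>2"] by simp
    finally show ?thesis .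
  qed
  have sG: "summable (\<lambda>j. real n * G j)" by (rule summable_mult[OF sums_summable[OF Gs]])
  have sA: "summable (\<lambda>j. (cmod (Aop n g j))\<^sup>2)"
    by (rule summable_comparison_test[OF _ sG]) (use bound in auto)
  show "Aop n g \<in> H2" using sA by (simp add: H2_def)
  have "(\<Sum>j. (cmod (Aop n g j))\<^sup>2) \<le> (\<Sum>j. real n * G j)"
    by (rule suminf_le[OF bound sA sG])
  also have "\<dots> = real n * (\<Sum>k. (cmod (g k))\<^sup>2)"
    using suminf_mult[OF sums_summable[OF Gs], of "real n"] Gs by (simp add: sums_iff)
  finally have "h2norm (Aop n g) \<le> sqrt (real n * (\<Sum>k. (cmod (g k))\<^sup>2))"
    unfolding h2norm_def by (rule real_sqrt_le_mono)
  thus "h2norm (Aop n g) \<le> sqrt n * h2norm g" by (simp add: h2norm_def real_sqrt_mult)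
qed

lemma delta_H2: "(\<lambda>i. if i = j then (1::complex) else 0) \<in> H2"
  by (rule H2_finite(1)[of "Suc j"]) auto

lemma Wadj_eq: assumes n: "0 < n" and g: "g \<in> H2"
  shows "Wadj n g = Aop n g"
  unfolding Wadj_def
proof (rule the_equality)
  show "Aop n g \<in> H2 \<and> (\<forall>f\<in>H2. h2inner (W n f) g = h2inner f (Aop n g))"
  proof (intro conjI ballI)
    show "Aop n g \<in> H2" by (rule Aop_H2[OF n g])
    fix f assume f: "f \<in> H2"
    define t where "t = (\<lambda>k. f (k div n) * cnj (g k))"
    have Fb: "(\<Sum>k<N. (cmod (f (k div n)))\<^sup>2) \<le> n * (h2norm f)\<^sup>2" for N
    proof -
      have "(\<Sum>k<N. (cmod (f (k div n)))\<^sup>2) \<le> (\<Sum>k<N*n. (cmod (f (k div n)))\<^sup>2)"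
        by (rule sum_mono2) (use n in auto)
      also have "\<dots> = (\<Sum>j<N. sum (\<lambda>k. (cmod (f (k div n)))\<^sup>2) {j*n..<j*n+n})"
        by (rule sum.nat_group[symmetric])
      also have "\<dots> = (\<Sum>j<N. n * (cmod (f j))\<^sup>2)"
      proof (rule sum.cong[OF refl])
        fix j
        have "sum (\<lambda>k. (cmod (f (k div n)))\<^sup>2) {j*n..<j*n+n} = sum (\<lambda>k. (cmod (f j))\<^sup>2) {j*n..<j*n+n}"
          by (rule sum.cong[OF refl]) (use div_in_block[OF n] in auto)
        thus "sum (\<lambda>k. (cmod (f (k div n)))\<^sup>2) {j*n..<j*n+n} = n * (cmod (f j))\<^sup>2" by simp
      qed
      also have "\<dots> = n * (\<Sum>j<N. (cmod (f j))\<^sup>2)" by (simp add: sum_distrib_left)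
      also have "\<dots> \<le> n * (h2norm f)\<^sup>2"
        by (rule mult_left_mono) (use partial_le_h2[OF _ f] in auto)
      finally show ?thesis .
    qed
    have sF: "summable (\<lambda>k. (cmod (f (k div n)))\<^sup>2)"
      by (rule bounded_imp_summable[of _ "n * (h2norm f)\<^sup>2"]) (simp, metis Fb lessThan_Suc_atMost)
    have st: "summable (\<lambda>k. norm (t k))"
    proof (rule summable_comparison_test[OF _ summable_add[OF sF H2_summable[OF g]]])
      show "\<exists>N. \<forall>k\<ge>N. norm (norm (t k)) \<le> (cmod (f (k div n)))\<^sup>2 + (cmod (g k))\<^sup>2"
      proof (intro exI allI impI)
        fix k
        have "cmod (f (k div n)) * cmod (g k) \<le> (cmod (f (k div n)))\<^sup>2 + (cmod (g k))\<^sup>2"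
          using sum_squares_bound[of "cmod (f (k div n))" "cmod (g k)"]
            mult_nonneg_nonneg[OF norm_ge_zero norm_ge_zero, of "f (k div n)" "g k"] by linarith
        thus "norm (norm (t k)) \<le> (cmod (f (k div n)))\<^sup>2 + (cmod (g k))\<^sup>2"
          by (simp add: t_def norm_mult)
      qed
    qed
    have ts: "t sums (\<Sum>k. t k)" by (rule summable_sums[OF summable_norm_cancel[OF st]])
    have "(\<lambda>j. sum t {j*n..<j*n+n}) sums (\<Sum>k. t k)" by (rule sums_group[OF ts n])
    moreover have "sum t {j*n..<j*n+n} = f j * cnj (Aop n g j)" for j
    proof -
      have "sum t {j*n..<j*n+n} = sum (\<lambda>k. f j * cnj (g k)) {j*n..<j*n+n}"
        unfolding t_def by (rule sum.cong[OF refl]) (use div_in_block[OF n] in auto)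
      also have "\<dots> = f j * cnj (\<Sum>r<n. g (n * j + r))"
        by (simp add: group_eq sum_distrib_left)
      finally show ?thesis by (simp add: Aop_def)
    qed
    ultimately have "(\<lambda>j. f j * cnj (Aop n g j)) sums (\<Sum>k. t k)" by simp
    thus "h2inner (W n f) g = h2inner f (Aop n g)"
      unfolding h2inner_def W_def t_def by (simp add: sums_iff)
  qed
next
  fix h assume h: "h \<in> H2 \<and> (\<forall>f\<in>H2. h2inner (W n f) g = h2inner f h)"
  show "h = Aop n g"
  proof
    fix j
    define d :: "nat \<Rightarrow> complex" where "d = (\<lambda>i. if i = j then (1::complex) else 0)"
    have "h2inner (W n d) g = h2inner d h" using h delta_H2 unfolding d_def by blast
    moreover have "h2inner d h = cnj (h j)"
      unfolding h2inner_def d_def by (subst suminf_finite[of "{j}"]) auto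
    moreover have "h2inner (W n d) g = cnj (Aop n g j)"
    proof -
      have "h2inner (W n d) g = sum (\<lambda>k. d (k div n) * cnj (g k)) {j*n..<j*n+n}"
        unfolding h2inner_def W_def
        by (rule suminf_finite) (use div_in_block[OF n] in \<open>auto simp: d_def\<close>)
      also have "\<dots> = sum (\<lambda>k. cnj (g k)) {j*n..<j*n+n}"
        by (rule sum.cong[OF refl]) (use div_in_block[OF n] in \<open>auto simp: d_def\<close>)
      also have "\<dots> = cnj (Aop n g j)" by (simp add: Aop_def group_eq)
      finally show ?thesis .
    qed
    ultimately show "h j = Aop n g j" by simp
  qed
qed



lemma Aop_add: "Aop n (\<lambda>i. a i + b i) = (\<lambda>j. Aop n a j + Aop n b j)"
  by (simp add: Aop_def sum.distrib)
lemma Aop_diff: "Aop n (\<lambda>i. a i - b i) = (\<lambda>j. Aop n a j - Aop n b j)"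
  by (simp add: Aop_def sum_subtractf)
lemma Aop_scale: "Aop n (\<lambda>i. c * a i) = (\<lambda>j. c * Aop n a j)"
  by (simp add: Aop_def sum_distrib_left)
lemma Aop_zero: "Aop n (\<lambda>i. 0) = (\<lambda>j. 0)"
  by (simp add: Aop_def)
lemma Aop_sum: "Aop n (\<lambda>i. \<Sum>j\<in>F. v j i) = (\<lambda>i. \<Sum>j\<in>F. Aop n (v j) i)"
  unfolding Aop_def by (rule ext) (rule sum.swap)

lemma pow_add: "(Aop n ^^ k) (\<lambda>i. a i + b i) = (\<lambda>j. (Aop n ^^ k) a j + (Aop n ^^ k) b j)"
  by (induction k) (simp_all add: Aop_add)
lemma pow_diff: "(Aop n ^^ k) (\<lambda>i. a i - b i) = (\<lambda>j. (Aop n ^^ k) a j - (Aop n ^^ k) b j)"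
  by (induction k) (simp_all add: Aop_diff)
lemma pow_scale: "(Aop n ^^ k) (\<lambda>i. c * a i) = (\<lambda>j. c * (Aop n ^^ k) a j)"
  by (induction k) (simp_all add: Aop_scale)
lemma pow_zero: "(Aop n ^^ k) (\<lambda>i. 0) = (\<lambda>j. 0)"
  by (induction k) (simp_all add: Aop_zero)
lemma pow_sum: "(Aop n ^^ k) (\<lambda>i. \<Sum>j\<in>F. v j i) = (\<lambda>i. \<Sum>j\<in>F. (Aop n ^^ k) (v j) i)"
proof (induction k)
  case (Suc k)
  show ?case by (simp add: Suc Aop_sum)
qed simp

lemma pow_H2: assumes "0 < n" "g \<in> H2"
  shows "(Aop n ^^ k) g \<in> H2 \<and> h2norm ((Aop n ^^ k) g) \<le> sqrt n ^ k * h2norm g"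
proof (induction k)
  case 0 thus ?case using assms by simp
next
  case (Suc k)
  have 1: "Aop n ((Aop n ^^ k) g) \<in> H2" using Aop_H2(1)[OF assms(1)] Suc by blast
  have "h2norm (Aop n ((Aop n ^^ k) g)) \<le> sqrt n * h2norm ((Aop n ^^ k) g)"
    using Aop_H2(2)[OF assms(1)] Suc by blast
  also have "\<dots> \<le> sqrt n * (sqrt n ^ k * h2norm g)"
    using Suc by (intro mult_left_mono) auto
  finally show ?case using 1 by (simp add: mult.assoc)
qed

lemma Wadj_pow: assumes "0 < n" "x \<in> H2" shows "(Wadj n ^^ k) x = (Aop n ^^ k) x"
proof (induction k)
  case (Suc k)
  have "(Aop n ^^ k) x \<in> H2" using pow_H2[OF assms] by blast
  thus ?case using Suc by (simp add: Wadj_eq[OF assms(1)])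
qed simp

definition ind :: "nat \<Rightarrow> nat \<Rightarrow> nat \<Rightarrow> complex" where
  "ind p q = (\<lambda>i. if p \<le> i \<and> i < q then 1 else 0)"

lemma Aop_ind: assumes "0 < n" shows "Aop n (ind (n*p) (n*q)) = (\<lambda>j. of_nat n * ind p q j)"
proof
  fix j
  have e: "ind (n*p) (n*q) (n*j + r) = ind p q j" if "r < n" for r
  proof -
    have d: "(n*j + r) div n = j" using that assms by simp
    have "n*p \<le> n*j + r \<longleftrightarrow> p \<le> j"
      using less_eq_div_iff_mult_less_eq[OF assms, of p "n*j+r"] d by (simp add: mult.commute)
    moreover have "n*j + r < n*q \<longleftrightarrow> j < q"
      using div_less_iff_less_mult[OF assms, of "n*j+r" q] d by (simp add: mult.commute)
    ultimately show ?thesis by (simp add: ind_def)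
  qed
  have "(\<Sum>r<n. ind (n*p) (n*q) (n*j + r)) = (\<Sum>r<n. ind p q j)"
    by (rule sum.cong) (auto simp: e)
  thus "Aop n (ind (n*p) (n*q)) j = of_nat n * ind p q j" by (simp add: Aop_def)
qed

lemma pow_ind: assumes "0 < n"
  shows "(Aop n ^^ k) (ind (n^k*p) (n^k*q)) = (\<lambda>j. of_nat n ^ k * ind p q j)"
proof (induction k arbitrary: p q)
  case (Suc k)
  have "(Aop n ^^ Suc k) (ind (n^Suc k*p) (n^Suc k*q)) = (Aop n ^^ k) (Aop n (ind (n*(n^k*p)) (n*(n^k*q))))"
    unfolding funpow_Suc_right comp_def by (simp add: mult.assoc)
  also have "\<dots> = (Aop n ^^ k) (\<lambda>j. of_nat n * ind (n^k*p) (n^k*q) j)"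
    by (simp add: Aop_ind[OF assms])
  also have "\<dots> = (\<lambda>j. of_nat n * (Aop n ^^ k) (ind (n^k*p) (n^k*q)) j)"
    by (simp add: pow_scale)
  also have "\<dots> = (\<lambda>j. of_nat n ^ Suc k * ind p q j)" by (simp add: Suc mult.assoc)
  finally show ?case .
qed simp

lemma Aop_delta: assumes "0 < n" shows "Aop n (ind i (Suc i)) j = (if i div n = j then 1 else 0)"
proof -
  have "Aop n (ind i (Suc i)) j = sum (ind i (Suc i)) {j*n..<j*n+n}"
    by (simp add: Aop_def group_eq)
  also have "\<dots> = sum (\<lambda>k. if k = i then 1 else 0) {j*n..<j*n+n}"
    by (rule sum.cong) (auto simp: ind_def)
  also have "\<dots> = (if i \<in> {j*n..<j*n+n} then 1 else 0)" by simp
  finally show ?thesis using div_in_block[OF assms] by simp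
qed

lemma ind_norm: "ind p q \<in> H2" "h2norm (ind p q) = sqrt (real (q - p))"
proof -
  show "ind p q \<in> H2" by (rule H2_finite(1)[of q]) (auto simp: ind_def)
  have "h2norm (ind p q) = sqrt (\<Sum>i<q. (cmod (ind p q i))\<^sup>2)"
    by (rule H2_finite(2)[of q]) (auto simp: ind_def)
  also have "(\<Sum>i<q. (cmod (ind p q i))\<^sup>2) = (\<Sum>i\<in>{..<q}. if i \<in> {p..<q} then 1 else 0)"
    by (rule sum.cong) (auto simp: ind_def)
  also have "\<dots> = (\<Sum>i\<in>{..<q} \<inter> {p..<q}. (1::real))" by (rule sum.inter_restrict[symmetric]) simp
  also have "\<dots> = real (card ({..<q} \<inter> {p..<q}))" by simp
  also have "{..<q} \<inter> {p..<q} = {p..<q}" by auto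
  finally show "h2norm (ind p q) = sqrt (real (q - p))" by simp
qed



lemma aux4: "2*(Suc d) + 1 + 4^d \<le> (4::nat)^(Suc d)"
  by (induction d) auto

lemma aux_exp: assumes "J < j" shows "2*j + 4^J + 1 \<le> (4::nat)^j"
proof -
  obtain d where d: "j = Suc d" "J \<le> d" using assms by (cases j) auto
  have h: "(4::nat)^J \<le> 4^d" using d(2) by (simp add: power_increasing)
  have a: "2*Suc d + 1 + 4^d \<le> (4::nat)^Suc d" by (rule aux4)
  show ?thesis unfolding d(1) using a h by linarith
qed

lemma geom_eq: assumes "a \<le> b"
  shows "(\<Sum>j\<in>{a..<b}. (1/2::real)^j) = 2*(1/2)^a - 2*(1/2)^b"
  using assms
proof (induction b rule: dec_induct)
  case base thus ?case by simp
next
  case (step b)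
  thus ?case by (simp add: sum.atLeastLessThan_Suc)
qed

lemma geom_le: "(\<Sum>j\<in>{Suc J..<b}. (1/2::real)^j) \<le> (1/2)^J"
proof (cases "Suc J \<le> b")
  case True
  thus ?thesis by (simp add: geom_eq)
next
  case False thus ?thesis by simp
qed

lemma sqrt_pow_even: "sqrt (real n) ^ (2*a) = real n ^ a"
  by (simp add: power_mult)

locale Wn = fixes n :: nat assumes n2: "2 \<le> n" begin

lemma npos: "0 < n" using n2 by simp

definition bblk :: "nat \<Rightarrow> nat \<Rightarrow> complex" where
  "bblk m = (\<lambda>i. (1 / of_nat n ^ m) * (ind (n^m*n) (n^m*(n+1)) i - ind (n^m*(n+1)) (n^m*(n+2)) i))"

lemma bblk_pow: "(Aop n ^^ m) (bblk m) = (\<lambda>j. ind n (n+1) j - ind (n+1) (n+2) j)"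
proof -
  have "(Aop n ^^ m) (bblk m) = (\<lambda>j. (1 / of_nat n ^ m) * (of_nat n ^ m * ind n (n+1) j - of_nat n ^ m * ind (n+1) (n+2) j))"
    unfolding bblk_def pow_scale pow_diff pow_ind[OF npos] by simp
  also have "\<dots> = (\<lambda>j. ind n (n+1) j - ind (n+1) (n+2) j)"
    using npos by (simp add: right_diff_distrib[symmetric])
  finally show ?thesis .
qed

lemma bblk_kill: assumes "m < k" shows "(Aop n ^^ k) (bblk m) = (\<lambda>j. 0)"
proof -
  obtain d0 where d0: "k = Suc (m + d0)" using less_imp_Suc_add[OF assms] by blast
  have d: "k = d0 + Suc m" using d0 by simp
  have sn: "Suc n div n = 1" by (rule div_nat_eqI) (use n2 in auto)
  have "(Aop n ^^ Suc m) (bblk m) = Aop n (\<lambda>j. ind n (n+1) j - ind (n+1) (n+2) j)"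
    by (simp add: bblk_pow)
  also have "\<dots> = (\<lambda>j. 0)"
    using Aop_delta[OF npos, of n] Aop_delta[OF npos, of "Suc n"] sn npos
    by (simp add: Aop_diff)
  finally have "(Aop n ^^ Suc m) (bblk m) = (\<lambda>j. 0)" .
  thus ?thesis unfolding d funpow_add comp_def by (simp add: pow_zero)
qed

lemma bblk_below: "i < n^m*n \<Longrightarrow> bblk m i = 0"
  by (simp add: bblk_def ind_def)

lemma bblk_H2: "bblk m \<in> H2"
  unfolding bblk_def by (intro h2_scale(1) h2_diff(1) ind_norm(1))

lemma bblk_norm: "h2norm (bblk (2*q)) \<le> 2 / real n ^ q"
proof -
  let ?m = "2*q"
  let ?a = "ind (n^?m*n) (n^?m*(n+1))" and ?b = "ind (n^?m*(n+1)) (n^?m*(n+2))"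
  have "h2norm (bblk ?m) = cmod (1 / of_nat n ^ ?m) * h2norm (\<lambda>i. ?a i - ?b i)"
    unfolding bblk_def by (rule h2_scale(2)) (intro h2_diff(1) ind_norm(1))
  also have "\<dots> \<le> cmod (1 / of_nat n ^ ?m) * (h2norm ?a + h2norm ?b)"
    by (intro mult_left_mono h2_diff(2) ind_norm(1)) auto
  also have "h2norm ?a = real n ^ q" by (simp add: ind_norm(2) algebra_simps power_mult)
  also have "h2norm ?b = real n ^ q" by (simp add: ind_norm(2) algebra_simps power_mult)
  also have "cmod (1 / of_nat n ^ ?m) * (real n ^ q + real n ^ q) = 2 / real n ^ q"
    using npos by (simp add: norm_divide norm_power norm_mult power_mult field_simps power2_eq_square)
  finally show ?thesis .
qed

definition v :: "nat \<Rightarrow> nat \<Rightarrow> complex" where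
  "v j = (\<lambda>i. (2::complex)^j * bblk (2*4^j) i)"

lemma v_H2: "v j \<in> H2" unfolding v_def by (rule h2_scale(1)[OF bblk_H2])

lemma v_norm: "h2norm (v j) \<le> 2^j * (2 / real n ^ (4^j))"
proof -
  have "h2norm (v j) = 2^j * h2norm (bblk (2*4^j))"
    unfolding v_def by (simp add: h2_scale(2)[OF bblk_H2] norm_power)
  also have "\<dots> \<le> 2^j * (2 / real n ^ (4^j))"
    by (rule mult_left_mono[OF bblk_norm]) simp
  finally show ?thesis .
qed

lemma v_pow: "(Aop n ^^ (2*4^j)) (v j) = (\<lambda>i. 2^j * (ind n (n+1) i - ind (n+1) (n+2) i))"
  unfolding v_def pow_scale bblk_pow by simp

lemma v_kill: "2*4^j < k \<Longrightarrow> (Aop n ^^ k) (v j) = (\<lambda>i. 0)"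
  unfolding v_def pow_scale by (simp add: bblk_kill)

lemma v_below: assumes "i < j" shows "v j i = 0"
proof -
  have "j < 2^j" by (rule less_exp)
  also have "(2::nat)^j \<le> 2^(2*4^j)"
  proof (rule power_increasing)
    have "(2::nat)^j \<le> 4^j" by (rule power_mono) auto
    thus "j \<le> 2*4^j" using less_exp[of j] by linarith
  qed simp
  also have "(2::nat)^(2*4^j) \<le> n^(2*4^j)" by (rule power_mono) (use n2 in auto)
  also have "\<dots> \<le> n^(2*4^j) * n" using npos by simp
  finally show ?thesis unfolding v_def using assms by (simp add: bblk_below)
qed

end


context Wn begin

definition Q :: "nat \<Rightarrow> nat \<Rightarrow> nat \<Rightarrow> complex" where
  "Q a b = (\<lambda>i. \<Sum>j\<in>{a..<b}. v j i)"

lemma Q_H2: "Q a b \<in> H2 \<and> h2norm (Q a b) \<le> (\<Sum>j\<in>{a..<b}. h2norm (v j))"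
proof (induction b)
  case 0 thus ?case using h2_zero by (simp add: Q_def)
next
  case (Suc b)
  show ?case
  proof (cases "a \<le> b")
    case True
    have e: "Q a (Suc b) = (\<lambda>i. Q a b i + v b i)"
      unfolding Q_def using True by (simp add: sum.atLeastLessThan_Suc)
    have "h2norm (Q a (Suc b)) \<le> h2norm (Q a b) + h2norm (v b)"
      unfolding e using h2_add(2)[of "Q a b" "v b"] Suc v_H2 by blast
    also have "\<dots> \<le> (\<Sum>j\<in>{a..<b}. h2norm (v j)) + h2norm (v b)" using Suc by simp
    finally show ?thesis unfolding e using h2_add(1)[of "Q a b" "v b"] Suc v_H2 True
      by (simp add: sum.atLeastLessThan_Suc)
  next
    case False
    hence "{a..<Suc b} = {}" by auto
    thus ?thesis using h2_zero by (simp add: Q_def)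
  qed
qed

definition u :: "nat \<Rightarrow> complex" where
  "u = (\<lambda>i. \<Sum>j<Suc i. v j i)"

lemma u_eq: assumes "Suc i \<le> N" shows "(\<Sum>j<N. v j i) = u i"
proof -
  have "(\<Sum>j<N. v j i) = (\<Sum>j\<in>{0..<Suc i}. v j i) + (\<Sum>j\<in>{Suc i..<N}. v j i)"
    using sum.atLeastLessThan_concat[of 0 "Suc i" N "\<lambda>j. v j i"] assms by (simp add: atLeast0LessThan)
  also have "(\<Sum>j\<in>{Suc i..<N}. v j i) = 0" by (rule sum.neutral) (auto simp: v_below)
  finally show ?thesis by (simp add: u_def atLeast0LessThan)
qed

definition T :: "nat \<Rightarrow> nat \<Rightarrow> complex" where
  "T J = (\<lambda>i. u i - Q 0 (Suc J) i)"

lemma key_ineq: assumes "J < j"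
  shows "2^j * (2 / real n ^ (4^j)) \<le> 2 * (1/2)^j / real n ^ (4^J+1)"
proof -
  have "(4::nat)^j \<le> (n^2)^j" by (rule power_mono) (use n2 in \<open>auto simp: power2_eq_square intro: order_trans[OF _ mult_mono[of 2 n 2 n]]\<close>)
  hence "(4::nat)^j * n^(4^J+1) \<le> n^(2*j) * n^(4^J+1)" by (simp add: power_mult)
  also have "\<dots> = n^(2*j + 4^J + 1)" by (simp add: power_add)
  also have "\<dots> \<le> n^(4^j)" by (rule power_increasing[OF aux_exp[OF assms]]) (use npos in auto)
  finally have h: "real (4^j * n^(4^J+1)) \<le> real (n^(4^j))" by linarith
  have p1: "real n ^ (4^j) > 0" "real n ^ (4^J+1) > 0" using npos by auto
  have "2^j * (2 / real n ^ (4^j)) = 2 * (1/2)^j * (4^j / real n ^ (4^j))"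
  proof -
    have f4: "(4::real)^j = 2^j * 2^j" by (simp flip: power_mult_distrib)
    show ?thesis unfolding f4 using p1 by (simp add: field_simps)
  qed
  also have "\<dots> \<le> 2 * (1/2)^j * (1 / real n ^ (4^J+1))"
  proof (rule mult_left_mono)
    show "4^j / real n ^ (4^j) \<le> 1 / real n ^ (4^J+1)"
      using h p1 by (simp add: divide_simps)
  qed simp
  finally show ?thesis by simp
qed

lemma T_H2: "T J \<in> H2 \<and> h2norm (T J) \<le> 2 * (1/2)^J / real n ^ (4^J+1)"
proof (rule H2_fatou[where g = "\<lambda>N. Q (Suc J) N" and Nz = "Suc J" and Ni = "\<lambda>i. Suc i + Suc J"])
  fix N assume N: "Suc J \<le> N"
  show "Q (Suc J) N \<in> H2" using Q_H2 by blast
  have "h2norm (Q (Suc J) N) \<le> (\<Sum>j\<in>{Suc J..<N}. h2norm (v j))" using Q_H2 by blast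
  also have "\<dots> \<le> (\<Sum>j\<in>{Suc J..<N}. 2 * (1/2)^j / real n ^ (4^J+1))"
    by (rule sum_mono) (rule order_trans[OF v_norm key_ineq], auto)
  also have "\<dots> = 2 / real n ^ (4^J+1) * (\<Sum>j\<in>{Suc J..<N}. (1/2)^j)"
    by (simp add: sum_distrib_left)
  also have "\<dots> \<le> 2 / real n ^ (4^J+1) * (1/2)^J"
    by (rule mult_left_mono[OF geom_le]) simp
  finally show "h2norm (Q (Suc J) N) \<le> 2 * (1/2)^J / real n ^ (4^J+1)" by simp
next
  fix i N assume N: "Suc i + Suc J \<le> N"
  have "(\<Sum>j<N. v j i) = (\<Sum>j\<in>{0..<Suc J}. v j i) + (\<Sum>j\<in>{Suc J..<N}. v j i)"
    using sum.atLeastLessThan_concat[of 0 "Suc J" N "\<lambda>j. v j i"] N by (simp add: atLeast0LessThan)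
  thus "Q (Suc J) N i = T J i" unfolding Q_def T_def using u_eq[of i N] N by simp
qed

end


context Wn begin

lemma u_split: "u = (\<lambda>i. Q 0 (Suc J) i + T J i)" by (simp add: T_def)

lemma T_H2': "T J \<in> H2" using T_H2 by blast

lemma u_H2: "u \<in> H2"
  using h2_add(1)[of "Q 0 (Suc 0)" "T 0"] Q_H2 T_H2' u_split[of 0] by simp

lemma lt_4pow: "J < 2*4^J + (2::nat)"
proof -
  have "J < 2^J" by (rule less_exp)
  also have "(2::nat)^J \<le> 4^J" by (rule power_mono) auto
  finally show ?thesis by linarith
qed

lemma Q_kill: assumes "\<And>j. j \<in> {a..<b} \<Longrightarrow> 2*4^j < k"
  shows "(Aop n ^^ k) (Q a b) = (\<lambda>i. 0)"
  unfolding Q_def pow_sum by (rule ext, rule sum.neutral) (auto simp: v_kill assms)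

lemma u_small: "h2norm ((Aop n ^^ (2*4^J+2)) u) \<le> 2*(1/2)^J"
proof -
  let ?k = "2*4^J+2::nat"
  have kq: "(Aop n ^^ ?k) (Q 0 (Suc J)) = (\<lambda>i. 0)"
  proof (rule Q_kill)
    fix j assume "j \<in> {0..<Suc J}"
    hence "(4::nat)^j \<le> 4^J" by (intro power_increasing) auto
    thus "2*4^j < ?k" by linarith
  qed
  have e: "(Aop n ^^ ?k) u = (Aop n ^^ ?k) (T J)"
    by (subst u_split[of J], simp only: pow_add kq) simp
  have "h2norm ((Aop n ^^ ?k) (T J)) \<le> sqrt n ^ ?k * h2norm (T J)"
    using pow_H2[OF npos T_H2'] by blast
  also have "sqrt n ^ ?k = real n ^ (4^J+1)"
    using sqrt_pow_even[of n "4^J+1"] by (simp add: algebra_simps)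
  also have "real n ^ (4^J+1) * h2norm (T J) \<le> real n ^ (4^J+1) * (2 * (1/2)^J / real n ^ (4^J+1))"
    by (rule mult_left_mono) (use T_H2 in auto)
  also have "\<dots> = 2*(1/2)^J" using npos by simp
  finally show ?thesis using e by simp
qed

lemma u_big: "2^J - 2 \<le> h2norm ((Aop n ^^ (2*4^J)) u)"
proof -
  let ?k = "2*4^J::nat"
  have k0: "(Aop n ^^ ?k) (Q 0 J) = (\<lambda>i. 0)"
  proof (rule Q_kill)
    fix j assume "j \<in> {0..<J}"
    hence "(4::nat)^j < 4^J" by (intro power_strict_increasing) auto
    thus "2*4^j < ?k" by linarith
  qed
  have qs: "Q 0 (Suc J) = (\<lambda>i. Q 0 J i + v J i)"
    unfolding Q_def by (simp add: sum.atLeastLessThan_Suc)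
  have e: "(Aop n ^^ ?k) u n = 2^J + (Aop n ^^ ?k) (T J) n"
    by (subst u_split[of J], subst qs, simp only: pow_add k0 v_pow) (simp add: ind_def)
  have "cmod ((Aop n ^^ ?k) (T J) n) \<le> h2norm ((Aop n ^^ ?k) (T J))"
    by (rule coord_le_h2) (use pow_H2[OF npos T_H2'] in blast)
  also have "\<dots> \<le> sqrt n ^ ?k * h2norm (T J)"
    using pow_H2[OF npos T_H2'] by blast
  also have "sqrt n ^ ?k = real n ^ (4^J)"
    using sqrt_pow_even[of n "4^J"] by simp
  also have "real n ^ (4^J) * h2norm (T J) \<le> real n ^ (4^J) * (2 * (1/2)^J / real n ^ (4^J+1))"
    by (rule mult_left_mono) (use T_H2 in auto)
  also have "\<dots> = 2 * (1/2)^J / real n" using npos by (simp add: field_simps)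
  also have "\<dots> \<le> 2"
  proof -
    have "(1/2::real)^J \<le> 1" by (simp add: power_le_one)
    moreover have "real n \<ge> 1" using npos by simp
    ultimately have "2*(1/2::real)^J \<le> 2 * real n" by linarith
    thus ?thesis using npos by (simp add: pos_divide_le_eq)
  qed
  finally have t: "cmod ((Aop n ^^ ?k) (T J) n) \<le> 2" .
  have "cmod ((2::complex)^J) - cmod ((Aop n ^^ ?k) (T J) n) \<le> cmod ((Aop n ^^ ?k) u n)"
    unfolding e by (rule norm_diff_ineq)
  moreover have "cmod ((2::complex)^J) = 2^J" by (simp add: norm_power)
  moreover have "cmod ((Aop n ^^ ?k) u n) \<le> h2norm ((Aop n ^^ ?k) u)"
    by (rule coord_le_h2) (use pow_H2[OF npos u_H2] in blast)
  ultimately show ?thesis using t by linarith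
qed

lemma u_irr1: assumes "0 < e" shows "\<exists>k\<ge>N. h2norm ((Aop n ^^ k) u) < e"
proof -
  obtain J0 where J0: "(1/2::real)^J0 < e/2" using real_arch_pow_inv[of "e/2" "1/2"] assms by auto
  define J where "J = N + J0"
  have "(1/2::real)^J \<le> (1/2)^J0" unfolding J_def by (rule power_decreasing) auto
  hence "h2norm ((Aop n ^^ (2*4^J+2)) u) < e" using u_small[of J] J0 by linarith
  moreover have "N \<le> 2*4^J+2" using lt_4pow[of J] unfolding J_def by linarith
  ultimately show ?thesis by blast
qed

lemma u_irr2: "\<exists>k\<ge>N. h2norm ((Aop n ^^ k) u) > B"
proof -
  obtain J0 where J0: "B + 2 < (2::real)^J0" using real_arch_pow[of 2 "B+2"] by auto
  define J where "J = N + J0"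
  have "(2::real)^J0 \<le> 2^J" unfolding J_def by (rule power_increasing) auto
  hence "h2norm ((Aop n ^^ (2*4^J)) u) > B" using u_big[of J] J0 by linarith
  moreover have "N \<le> 2*4^J"
  proof -
    have "J < 2^J" by (rule less_exp)
    also have "(2::nat)^J \<le> 4^J" by (rule power_mono) auto
    finally show ?thesis unfolding J_def by linarith
  qed
  ultimately show ?thesis by blast
qed

end


definition cq :: "rat \<times> rat \<Rightarrow> complex" where
  "cq p = Complex (of_rat (fst p)) (of_rat (snd p))"

definition dvec :: "(rat \<times> rat) list \<times> nat \<Rightarrow> nat \<Rightarrow> complex" where
  "dvec p = (let xs = fst p; M = snd p; L = length xs; s = (\<Sum>i<L. cq (xs ! i)) in
     (\<lambda>i. if i < L then cq (xs ! i) else if i < L + Suc M then - (s / of_nat (Suc M)) else 0))"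

lemma dvec_H2: "dvec p \<in> H2"
  by (rule H2_finite(1)[of "length (fst p) + Suc (snd p)"]) (auto simp: dvec_def Let_def)

lemma cq_approx: assumes "0 < e" shows "\<exists>p. cmod (z - cq p) < e"
proof -
  obtain r1 where r1: "r1 \<in> \<rat>" "Re z - e/2 < r1" "r1 < Re z + e/2"
    using Rats_dense_in_real[of "Re z - e/2" "Re z + e/2"] assms by auto
  obtain r2 where r2: "r2 \<in> \<rat>" "Im z - e/2 < r2" "r2 < Im z + e/2"
    using Rats_dense_in_real[of "Im z - e/2" "Im z + e/2"] assms by auto
  obtain a where a: "r1 = of_rat a" using r1(1) Rats_cases by blast
  obtain b where b: "r2 = of_rat b" using r2(1) Rats_cases by blast
  have "cmod (z - cq (a, b)) \<le> \<bar>Re (z - cq (a,b))\<bar> + \<bar>Im (z - cq (a,b))\<bar>" by (rule cmod_le)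
  also have "\<dots> < e" using r1 r2 a b by (simp add: cq_def abs_less_iff)
  finally show ?thesis by blast
qed

lemma kill_sum0:
  assumes "0 < n" shows "(\<forall>i\<ge>n^K. d i = 0) \<and> (\<Sum>i<n^K. d i) = 0 \<longrightarrow> (Aop n ^^ K) d = (\<lambda>i. 0)"
proof (induction K arbitrary: d)
  case 0
  show ?case
  proof
    assume h: "(\<forall>i\<ge>n^0. d i = 0) \<and> (\<Sum>i<n^0. d i) = 0"
    show "(Aop n ^^ 0) d = (\<lambda>i. 0)"
    proof
      fix i show "(Aop n ^^ 0) d i = 0" using h by (cases i) auto
    qed
  qed
next
  case (Suc K)
  show ?case
  proof
    assume h: "(\<forall>i\<ge>n^Suc K. d i = 0) \<and> (\<Sum>i<n^Suc K. d i) = 0"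
    have z: "\<forall>j\<ge>n^K. Aop n d j = 0"
    proof (intro allI impI)
      fix j assume j: "n^K \<le> j"
      have "n^Suc K \<le> n * j + r" for r using j assms by (simp add: trans_le_add1)
      thus "Aop n d j = 0" using h by (simp add: Aop_def)
    qed
    have "(\<Sum>j<n^K. Aop n d j) = (\<Sum>j<n^K. sum d {j*n..<j*n+n})" by (simp add: Aop_def group_eq)
    also have "\<dots> = sum d {..<n^K * n}" by (rule sum.nat_group)
    also have "\<dots> = 0" using h by (simp add: mult.commute)
    finally have "(Aop n ^^ K) (Aop n d) = (\<lambda>i. 0)" using Suc.IH z by blast
    thus "(Aop n ^^ Suc K) d = (\<lambda>i. 0)" by (simp only: funpow_Suc_right comp_def)
  qed
qed

context Wn begin

lemma dvec_kill: "\<exists>K. \<forall>k\<ge>K. (Aop n ^^ k) (dvec p) = (\<lambda>i. 0)"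
proof -
  obtain xs M where p: "p = (xs, M)" by (cases p)
  let ?L = "length xs"
  let ?s = "(\<Sum>i<length xs. cq (xs ! i))"
  let ?K = "length xs + Suc M"
  have d: "dvec p = (\<lambda>i. if i < ?L then cq (xs ! i) else if i < ?K then - (?s / of_nat (Suc M)) else 0)"
    unfolding p dvec_def Let_def fst_conv snd_conv by simp
  have Kn: "?K \<le> n^?K"
  proof -
    have "?K < 2^?K" by (rule less_exp)
    also have "(2::nat)^?K \<le> n^?K" by (rule power_mono) (use n2 in auto)
    finally show ?thesis by simp
  qed
  have sum0: "(\<Sum>i<n^?K. dvec p i) = 0"
  proof -
    have "(\<Sum>i<n^?K. dvec p i) = (\<Sum>i<?K. dvec p i)"
      by (rule sum.mono_neutral_right) (use Kn in \<open>auto simp: d\<close>)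
    also have "\<dots> = (\<Sum>i\<in>{0..<?L}. dvec p i) + (\<Sum>i\<in>{?L..<?K}. dvec p i)"
      using sum.atLeastLessThan_concat[of 0 ?L ?K "dvec p"] by (simp add: atLeast0LessThan)
    also have "(\<Sum>i\<in>{0..<?L}. dvec p i) = ?s" unfolding d by (simp add: atLeast0LessThan)
    also have "(\<Sum>i\<in>{?L..<?K}. dvec p i) = (\<Sum>i\<in>{?L..<?K}. - (?s / of_nat (Suc M)))"
      by (rule sum.cong) (auto simp: d)
    also have "\<dots> = - ?s"
    proof -
      have h: "1 + complex_of_nat M \<noteq> 0" by (metis of_nat_Suc of_nat_eq_0_iff nat.simps(3))
      thus ?thesis by simp
    qed
    finally show ?thesis by simp
  qed
  have kK: "(Aop n ^^ ?K) (dvec p) = (\<lambda>i. 0)"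
    using kill_sum0[OF npos, of ?K "dvec p"] sum0 Kn by (auto simp: d)
  show ?thesis
  proof (intro exI allI impI)
    fix k assume "?K \<le> k"
    then obtain t where kt: "k = t + ?K" by (metis add.commute le_add_diff_inverse)
    have "(Aop n ^^ k) (dvec p) = (Aop n ^^ t) ((Aop n ^^ ?K) (dvec p))"
      unfolding kt by (simp only: funpow_add[of t ?K] comp_def)
    thus "(Aop n ^^ k) (dvec p) = (\<lambda>i. 0)" by (simp only: kK pow_zero)
  qed
qed

end



lemma dvec_dense: assumes y: "y \<in> H2" and e: "0 < e" shows "\<exists>p. h2norm (\<lambda>i. y i - dvec p i) < e"
proof -
  define d where "d = e/3"
  have d0: "0 < d" using e by (simp add: d_def)
  obtain L where L: "\<forall>l\<ge>L. norm (\<Sum>i. (cmod (y (i + l)))\<^sup>2) < d\<^sup>2"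
    using suminf_exist_split[of "d\<^sup>2" "\<lambda>k. (cmod (y k))\<^sup>2"] d0 H2_summable[OF y] by auto
  define t2 where "t2 = (\<lambda>i. if i < L then 0 else y i)"
  have t2: "t2 \<in> H2" "h2norm t2 < d"
  proof -
    let ?f = "\<lambda>i. (cmod (t2 i))\<^sup>2"
    have sf: "summable ?f"
      by (rule summable_comparison_test[OF _ H2_summable[OF y]]) (auto simp: t2_def)
    show "t2 \<in> H2" using sf by (simp add: H2_def)
    have "suminf ?f = (\<Sum>i. ?f (i + L)) + sum ?f {..<L}" by (rule suminf_split_initial_segment[OF sf])
    also have "sum ?f {..<L} = 0" by (simp add: t2_def)
    also have "(\<Sum>i. ?f (i + L)) = (\<Sum>i. (cmod (y (i + L)))\<^sup>2)" by (simp add: t2_def)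
    finally have "suminf ?f < d\<^sup>2" using L[rule_format, of L] by simp
    hence "sqrt (suminf ?f) < sqrt (d\<^sup>2)" by (rule real_sqrt_less_mono)
    thus "h2norm t2 < d" using d0 by (simp add: h2norm_def)
  qed
  define eta where "eta = sqrt (d\<^sup>2 / (real L + 1))"
  have eta: "0 < eta" using d0 by (simp add: eta_def)
  have "\<forall>i. \<exists>p. cmod (y i - cq p) < eta" using cq_approx[OF eta] by blast
  then obtain f where f: "\<And>i. cmod (y i - cq (f i)) < eta" by metis
  define xs where "xs = map f [0..<L]"
  have xs: "length xs = L" "\<And>i. i < L \<Longrightarrow> xs ! i = f i" by (auto simp: xs_def)
  define t1 where "t1 = (\<lambda>i. if i < L then y i - cq (f i) else 0)"
  have t1: "t1 \<in> H2" "h2norm t1 < d"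
  proof -
    show "t1 \<in> H2" by (rule H2_finite(1)[of L]) (auto simp: t1_def)
    have h1: "h2norm t1 = sqrt (\<Sum>i<L. (cmod (t1 i))\<^sup>2)" by (rule H2_finite(2)[of L]) (auto simp: t1_def)
    have "(\<Sum>i<L. (cmod (t1 i))\<^sup>2) \<le> (\<Sum>i<L. eta\<^sup>2)"
    proof (rule sum_mono)
      fix i assume "i \<in> {..<L}"
      thus "(cmod (t1 i))\<^sup>2 \<le> eta\<^sup>2" using f[of i] by (simp add: t1_def power_mono less_imp_le)
    qed
    also have "(\<Sum>i<L. eta\<^sup>2) = real L * (d\<^sup>2 / (real L + 1))" using d0 by (simp add: eta_def)
    also have "\<dots> < d\<^sup>2" using d0 by (simp add: field_simps)
    finally have "sqrt (\<Sum>i<L. (cmod (t1 i))\<^sup>2) < sqrt (d\<^sup>2)" by (rule real_sqrt_less_mono)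
    thus "h2norm t1 < d" using d0 h1 by simp
  qed
  define s where "s = (\<Sum>i<L. cq (xs ! i))"
  obtain M where M: "(cmod s)\<^sup>2 / d\<^sup>2 < real M" using reals_Archimedean2 by blast
  define t3 where "t3 = (\<lambda>i. (s / of_nat (Suc M)) * ind L (L + Suc M) i)"
  have t3: "t3 \<in> H2" "h2norm t3 < d"
  proof -
    show "t3 \<in> H2" unfolding t3_def by (rule h2_scale(1)[OF ind_norm(1)])
    have "h2norm t3 = cmod (s / of_nat (Suc M)) * sqrt (real (Suc M))"
      unfolding t3_def h2_scale(2)[OF ind_norm(1)] ind_norm(2) by simp
    hence "(h2norm t3)\<^sup>2 = (cmod (s / of_nat (Suc M)))\<^sup>2 * real (Suc M)"
      by (simp only: power_mult_distrib real_sqrt_pow2[OF of_nat_0_le_iff])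
    also have "\<dots> = (cmod s)\<^sup>2 / real (Suc M)"
    proof -
      have "cmod (of_nat (Suc M) :: complex) = real (Suc M)" by (rule norm_of_nat)
      hence "cmod (s / of_nat (Suc M)) = cmod s / real (Suc M)" by (simp add: norm_divide del: of_nat_Suc)
      thus ?thesis by (simp add: power_divide power2_eq_square del: of_nat_Suc)
    qed
    also have "\<dots> < d\<^sup>2"
    proof -
      have "(cmod s)\<^sup>2 < real M * d\<^sup>2" using M d0 by (simp add: field_simps)
      also have "\<dots> \<le> real (Suc M) * d\<^sup>2" by (rule mult_right_mono) auto
      finally show ?thesis by (simp add: field_simps del: of_nat_Suc)
    qed
    finally show "h2norm t3 < d" by (rule power2_less_imp_less) (use d0 in simp)
  qed
  have t23: "(\<lambda>i. t2 i + t3 i) \<in> H2" "h2norm (\<lambda>i. t2 i + t3 i) \<le> h2norm t2 + h2norm t3"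
    using h2_add[OF t2(1) t3(1)] by auto
  have decomp: "(\<lambda>i. y i - dvec (xs, M) i) = (\<lambda>i. t1 i + (t2 i + t3 i))"
  proof
    fix i
    show "y i - dvec (xs, M) i = t1 i + (t2 i + t3 i)"
      by (cases "i < L"; cases "i < L + Suc M")
         (auto simp: dvec_def Let_def xs s_def t1_def t2_def t3_def ind_def)
  qed
  have "h2norm (\<lambda>i. y i - dvec (xs, M) i) \<le> h2norm t1 + h2norm (\<lambda>i. t2 i + t3 i)"
    unfolding decomp by (rule h2_add(2)[OF t1(1) t23(1)])
  also have "\<dots> < e" using t1 t2 t3 t23 by (simp add: d_def)
  finally show ?thesis by blast
qed



context Wn begin

definition ee :: "nat \<Rightarrow> nat \<Rightarrow> complex" where
  "ee m = dvec (from_nat (fst (prod_decode m)))"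

lemma ee_H2: "ee m \<in> H2" unfolding ee_def by (rule dvec_H2)

lemma ee_kill: "\<exists>K. \<forall>k\<ge>K. (Aop n ^^ k) (ee m) = (\<lambda>i. 0)"
  unfolding ee_def by (rule dvec_kill)

lemma ee_dense: assumes "y \<in> H2" "0 < e" shows "\<exists>m\<ge>N. h2norm (\<lambda>i. y i - ee m i) < e"
proof -
  obtain p where p: "h2norm (\<lambda>i. y i - dvec p i) < e" using dvec_dense[OF assms] by blast
  define m where "m = prod_encode (to_nat p, N)"
  have "ee m = dvec p" by (simp add: ee_def m_def prod_encode_inverse)
  moreover have "N \<le> m" unfolding m_def by (rule le_prod_encode_2)
  ultimately show ?thesis using p by auto
qed

lemma pair_irr:
  fixes c c' :: real and m m' :: nat
  assumes cc: "c \<noteq> c'"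
  defines "x \<equiv> (\<lambda>i. ee m i + complex_of_real c * u i)"
      and "y \<equiv> (\<lambda>i. ee m' i + complex_of_real c' * u i)"
  shows "liminf (\<lambda>k. ereal (h2norm ((Wadj n ^^ k) x - (Wadj n ^^ k) y))) = 0 \<and>
         limsup (\<lambda>k. ereal (h2norm ((Wadj n ^^ k) x - (Wadj n ^^ k) y))) = \<infinity>"
proof -
  obtain K1 where K1: "\<And>k. k \<ge> K1 \<Longrightarrow> (Aop n ^^ k) (ee m) = (\<lambda>i. 0)" using ee_kill by blast
  obtain K2 where K2: "\<And>k. k \<ge> K2 \<Longrightarrow> (Aop n ^^ k) (ee m') = (\<lambda>i. 0)" using ee_kill by blast
  define K where "K = max K1 K2"
  have xH: "x \<in> H2" unfolding x_def by (intro h2_add(1) ee_H2 h2_scale(1) u_H2)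
  have yH: "y \<in> H2" unfolding y_def by (intro h2_add(1) ee_H2 h2_scale(1) u_H2)
  define dl where "dl = \<bar>c - c'\<bar>"
  have dl: "0 < dl" using cc by (simp add: dl_def)
  define X where "X = (\<lambda>k. ereal (h2norm ((Wadj n ^^ k) x - (Wadj n ^^ k) y)))"
  have uk: "(Aop n ^^ k) u \<in> H2" for k using pow_H2[OF npos u_H2] by blast
  have Xk: "X k = ereal (dl * h2norm ((Aop n ^^ k) u))" if k: "K \<le> k" for k
  proof -
    have "(Wadj n ^^ k) x = (\<lambda>i. complex_of_real c * (Aop n ^^ k) u i)"
      unfolding Wadj_pow[OF npos xH] unfolding x_def pow_add pow_scale
      using K1[of k] k by (simp add: K_def)
    moreover have "(Wadj n ^^ k) y = (\<lambda>i. complex_of_real c' * (Aop n ^^ k) u i)"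
      unfolding Wadj_pow[OF npos yH] unfolding y_def pow_add pow_scale
      using K2[of k] k by (simp add: K_def)
    ultimately have "(Wadj n ^^ k) x - (Wadj n ^^ k) y = (\<lambda>i. complex_of_real (c - c') * (Aop n ^^ k) u i)"
      by (simp add: fun_diff_def algebra_simps)
    moreover have "cmod (complex_of_real (c - c')) = dl" unfolding dl_def by (rule norm_of_real)
    ultimately show ?thesis unfolding X_def by (simp only: h2_scale(2)[OF uk])
  qed
  have ev: "eventually (\<lambda>k. X k = ereal (dl * h2norm ((Aop n ^^ k) u))) sequentially"
    unfolding eventually_sequentially using Xk by blast
  have lim0: "liminf X = 0"
  proof (rule antisym)
    show "0 \<le> liminf X"
    proof (rule Liminf_bounded)
      show "\<forall>\<^sub>F k in sequentially. 0 \<le> X k"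
        using ev by eventually_elim (use dl h2norm_nonneg[OF uk] in simp)
    qed
    show "liminf X \<le> 0"
    proof (rule ccontr)
      assume "\<not> liminf X \<le> 0"
      hence "0 < liminf X" by simp
      then obtain r where r: "0 < ereal r" "ereal r < liminf X" using ereal_dense2 by blast
      have "eventually (\<lambda>k. ereal r < X k) sequentially"
        using le_Liminf_iff[of "liminf X" sequentially X] r(2) by blast
      then obtain N where N: "\<And>k. k \<ge> N \<Longrightarrow> ereal r < X k" unfolding eventually_sequentially by blast
      have "0 < r / dl" using r dl by simp
      then obtain k where k: "k \<ge> max N K" "h2norm ((Aop n ^^ k) u) < r / dl" using u_irr1 by blast
      have "dl * h2norm ((Aop n ^^ k) u) < r" using k(2) dl by (simp add: field_simps)
      moreover have "ereal r < ereal (dl * h2norm ((Aop n ^^ k) u))" using N[of k] Xk[of k] k(1) by simp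
      ultimately show False by simp
    qed
  qed
  have limI: "limsup X = \<infinity>"
  proof (rule ccontr)
    assume "limsup X \<noteq> \<infinity>"
    hence "limsup X < \<infinity>" by (simp add: less_top[symmetric])
    then obtain B where B: "limsup X < ereal B" using ereal_dense2 by blast
    have "eventually (\<lambda>k. X k < ereal B) sequentially"
      using Limsup_le_iff[where C="limsup X" and F=sequentially and X=X] B by blast
    then obtain N where N: "\<And>k. k \<ge> N \<Longrightarrow> X k < ereal B" unfolding eventually_sequentially by blast
    obtain k where k: "k \<ge> max N K" "h2norm ((Aop n ^^ k) u) > B / dl" using u_irr2 by blast
    have "B < dl * h2norm ((Aop n ^^ k) u)" using k(2) dl by (simp add: field_simps)
    moreover have "ereal (dl * h2norm ((Aop n ^^ k) u)) < ereal B" using N[of k] Xk[of k] k(1) by simp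
    ultimately show False by simp
  qed
  show ?thesis using lim0 limI unfolding X_def by simp
qed

end


context Wn begin

definition SS :: "(nat \<Rightarrow> complex) set" where
  "SS = (\<lambda>(m, c). (\<lambda>i. ee m i + complex_of_real c * u i)) ` {(m, c). (1/2)^(Suc m) < c \<and> c < (1/2::real)^m}"

lemma SS_H2: "SS \<subseteq> H2"
  unfolding SS_def by (auto intro!: h2_add(1) ee_H2 h2_scale(1) u_H2)

lemma u_nonzero: "\<exists>i0. u i0 \<noteq> 0"
proof (rule ccontr)
  assume "\<not> (\<exists>i0. u i0 \<noteq> 0)"
  hence u0: "u = (\<lambda>i. 0)" by auto
  obtain k where "h2norm ((Aop n ^^ k) u) > 0" using u_irr2[of 0 0] by blast
  thus False unfolding u0 pow_zero h2_zero(2) by simp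
qed

lemma SS_uncountable: "uncountable SS"
proof
  assume cS: "countable SS"
  obtain i0 where i0: "u i0 \<noteq> 0" using u_nonzero by blast
  define g where "g = (\<lambda>c::real. (\<lambda>i. ee 0 i + complex_of_real c * u i))"
  have inj: "inj_on g {1/2<..<1}"
  proof (rule inj_onI)
    fix c c' assume "g c = g c'"
    hence "g c i0 = g c' i0" by simp
    hence "complex_of_real c = complex_of_real c'" using i0 by (simp add: g_def)
    thus "c = c'" by simp
  qed
  have sub: "g ` {1/2<..<1} \<subseteq> SS"
  proof
    fix x assume "x \<in> g ` {1/2<..<1}"
    then obtain c where c: "c \<in> {1/2<..<1}" "x = g c" by blast
    show "x \<in> SS" unfolding SS_def c(2) g_def by (rule image_eqI[of _ _ "(0, c)"]) (use c(1) in auto)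
  qed
  have "countable (g ` {1/2<..<1})" by (rule countable_subset[OF sub cS])
  hence "countable {1/2<..<(1::real)}" using countable_image_inj_on inj by blast
  thus False using uncountable_open_interval[of "1/2" "1::real"] by simp
qed

lemma SS_dense: assumes y: "y \<in> H2" and e: "0 < e" shows "\<exists>s\<in>SS. h2norm (y - s) < e"
proof -
  have hu: "0 \<le> h2norm u" by (rule h2norm_nonneg[OF u_H2])
  obtain M0 where M0: "(1/2::real)^M0 < e / (2 * (h2norm u + 1))"
    using real_arch_pow_inv[of "e / (2 * (h2norm u + 1))" "1/2"] e hu by auto
  obtain m where m: "m \<ge> M0" "h2norm (\<lambda>i. y i - ee m i) < e/2"
    using ee_dense[OF y, of "e/2"] e by auto
  define c where "c = (3/4) * (1/2::real)^m"
  define s where "s = (\<lambda>i. ee m i + complex_of_real c * u i)"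
  have sS: "s \<in> SS" unfolding SS_def s_def
    by (rule image_eqI[of _ _ "(m, c)"]) (auto simp: c_def)
  have ys: "y - s = (\<lambda>i. (y i - ee m i) - complex_of_real c * u i)"
    by (rule ext) (simp add: s_def)
  have yH: "(\<lambda>i. y i - ee m i) \<in> H2" by (rule h2_diff(1)[OF y ee_H2])
  have "h2norm (y - s) \<le> h2norm (\<lambda>i. y i - ee m i) + h2norm (\<lambda>i. complex_of_real c * u i)"
    unfolding ys by (rule h2_diff(2)[OF yH h2_scale(1)[OF u_H2]])
  also have "h2norm (\<lambda>i. complex_of_real c * u i) = c * h2norm u"
    unfolding h2_scale(2)[OF u_H2] norm_of_real by (simp add: c_def)
  also have "c * h2norm u \<le> (1/2)^M0 * (h2norm u + 1)"
  proof -
    have "c \<le> (1/2)^m" by (simp add: c_def)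
    also have "(1/2::real)^m \<le> (1/2)^M0" by (rule power_decreasing[OF m(1)]) auto
    finally have "c \<le> (1/2)^M0" .
    moreover have "0 \<le> c" by (simp add: c_def)
    ultimately show ?thesis using hu by (intro mult_mono) auto
  qed
  also have "(1/2::real)^M0 * (h2norm u + 1) < e/2"
    using M0 hu by (simp add: field_simps)
  finally have "h2norm (y - s) < e" using m(2) by linarith
  thus ?thesis using sS by blast
qed

lemma chaos: "densely_Li_Yorke_chaotic H2 h2norm (Wadj n)"
  unfolding densely_Li_Yorke_chaotic_def
proof (intro exI[of _ SS] conjI ballI allI impI)
  show "SS \<subseteq> H2" by (rule SS_H2)
  show "uncountable SS" by (rule SS_uncountable)
next
  fix y e assume "y \<in> H2" "(0::real) < e"
  thus "\<exists>s\<in>SS. h2norm (y - s) < e" by (rule SS_dense)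
next
  fix x y assume x: "x \<in> SS" and y: "y \<in> SS" and xy: "x \<noteq> y"
  obtain m c where mc: "x = (\<lambda>i. ee m i + complex_of_real c * u i)" "(1/2)^(Suc m) < c" "c < (1/2::real)^m"
    using x unfolding SS_def by auto
  obtain m' c' where mc': "y = (\<lambda>i. ee m' i + complex_of_real c' * u i)" "(1/2)^(Suc m') < c'" "c' < (1/2::real)^m'"
    using y unfolding SS_def by auto
  have cc: "c \<noteq> c'"
  proof
    assume ceq: "c = c'"
    have "m = m'"
    proof (rule ccontr)
      assume "m \<noteq> m'"
      hence "m < m' \<or> m' < m" by auto
      thus False
      proof
        assume "m < m'"
        hence "(1/2::real)^m' \<le> (1/2)^(Suc m)" by (intro power_decreasing) auto
        thus False using mc mc' ceq by linarith
      next
        assume "m' < m"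
        hence "(1/2::real)^m \<le> (1/2)^(Suc m')" by (intro power_decreasing) auto
        thus False using mc mc' ceq by linarith
      qed
    qed
    thus False using xy mc mc' ceq by simp
  qed
  show "liminf (\<lambda>k. ereal (h2norm ((Wadj n ^^ k) x - (Wadj n ^^ k) y))) = 0"
    using pair_irr[OF cc, of m m'] mc(1) mc'(1) by simp
  show "limsup (\<lambda>k. ereal (h2norm ((Wadj n ^^ k) x - (Wadj n ^^ k) y))) = \<infinity>"
    using pair_irr[OF cc, of m m'] mc(1) mc'(1) by simp
qed

end

theorem mainTheorem16:
  fixes n :: nat
  assumes "n \<ge> 2"
  shows "densely_Li_Yorke_chaotic H2 h2norm (Wadj n)"
proof -
  interpret Wn n using assms by unfold_locales
  show ?thesis by (rule chaos)
qed


end
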